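(* Let $d,m_0,n,m$ be nonnegative integers with $n\ge1$, $m\ge1$. Then $\mathcal{L}(d,m_0,n,m)$ is a quasi-homogeneous $(-1)$-class if and only if $(d,m_0,n,m)$ is one of: (a) $(2,0,5,1)$ or $(1,1,1,1)$; (b) $(e,e-1,2e,1)$ with $e\ge1$; (c) $\left(\frac{x+y+3m}{2},\frac{x-y+m}{2},\frac{x+2y-1}{m}+4,m\right)$ for some $m\ge2$ and integers $x,y\ge1$ with $xy=(m-1)(2m+1)$, $x+m\ge y$, $x-y\equiv m\pmod 2$, and $m\mid x+2y-1$.
   Context: $\mathcal{L}(d,m_0,n,m)$ denotes the class (linear system) of plane curves of degree $d$ with multiplicity $m_0$ at a general point $p_0$ and $m$ at general points $p_1,\dots,p_n$. Its self-intersection is $\mathcal{L}^2=d^2-m_0^2-nm^2$ and its genus $g$ is defined by $2g-2=d(d-3)-m_0(m_0-1)-nm(m-1)$. A quasi-homogeneous $(-1)$-class is such an $\mathcal{L}(d,m_0,n,m)$ with $\mathcal{L}^2=-1$ and $g=0$ (equivalently $d^2-m_0^2-nm^2=-1$ and $3d-m_0-nm=1$). *)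

theory Defs
  imports "HOL-Number_Theory.Cong"
begin

text \<open>The class L(d,m0,n,m): degree d, multiplicity m0 at p0, m at p1..pn.\<close>

definition self_intersection :: "int \<Rightarrow> int \<Rightarrow> int \<Rightarrow> int \<Rightarrow> int" where
  "self_intersection d m0 n m = d^2 - m0^2 - n * m^2"

definition two_genus_minus_two :: "int \<Rightarrow> int \<Rightarrow> int \<Rightarrow> int \<Rightarrow> int" where
  "two_genus_minus_two d m0 n m = d * (d - 3) - m0 * (m0 - 1) - n * m * (m - 1)"

definition quasi_hom_minus_one_class :: "int \<Rightarrow> int \<Rightarrow> int \<Rightarrow> int \<Rightarrow> bool" where
  "quasi_hom_minus_one_class d m0 n m \<longleftrightarrow>
     self_intersection d m0 n m = -1 \<and> two_genus_minus_two d m0 n m = -2"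

end

theory Submission
  imports Defs
begin

lemma fwd_m1:
  fixes d m0 n :: int
  assumes "d \<ge> 0" "m0 \<ge> 0" "n \<ge> 1"
    and E1: "d^2 - m0^2 - n = -1" and E2: "d^2 - 3*d - m0^2 + m0 = -2"
  shows "(d = 2 \<and> m0 = 0 \<and> n = 5) \<or> (d = 1 \<and> m0 = 1 \<and> n = 1) \<or> (d \<ge> 1 \<and> m0 = d - 1 \<and> n = 2*d)"
proof -
  define k where "k = d - m0"
  have m0k: "m0 = d - k" using k_def by simp
  have e: "d^2 - 3*d - (d-k)^2 + (d-k) = -2" using E2 m0k by simp
  have "(k-1)*(2*d - (k+2)) = d^2 - 3*d - (d-k)^2 + (d-k) + 2"
    by (simp add: algebra_simps power2_eq_square)
  hence "(k-1)*(2*d - (k+2)) = 0" using e by simp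
  hence disj: "k = 1 \<or> 2*d = k+2" by simp
  have n3: "n = 3*d - m0 - 1" using E1 E2 by simp
  from disj show ?thesis
  proof
    assume "k = 1" thus ?thesis using m0k n3 assms(1-3) by simp
  next
    assume h: "2*d = k+2"
    hence "d = 1 \<or> d = 2" using m0k n3 assms(1-3) by linarith
    thus ?thesis using h m0k n3 by auto
  qed
qed

lemma neg_case:
  fixes a b m :: int
  assumes "m \<ge> 2" "a \<ge> 1" "b \<ge> 1" "a + 2*b \<le> 3*m - 1" "a*b = (m-1)*(2*m+1)"
  shows False
proof -
  have h1: "(a + 2*b)^2 \<le> (3*m-1)^2"
    using assms by (intro power_mono) auto
  have h2: "(a + 2*b)^2 \<ge> 8*(a*b)"
  proof -
    have "(a - 2*b)^2 \<ge> 0" by simp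
    thus ?thesis by (simp add: algebra_simps power2_eq_square)
  qed
  have "8*(a*b) \<le> (3*m-1)^2" using h1 h2 by linarith
  hence "8*((m-1)*(2*m+1)) \<le> (3*m-1)^2" using assms(5) by simp
  hence "(7*m-9)*(m+1) \<le> 0" by (simp add: algebra_simps power2_eq_square)
  moreover have "(7*m-9)*(m+1) > 0" using assms by simp
  ultimately show False by simp
qed

theorem proposition5p1:
  fixes d m0 n m :: int
  assumes "d \<ge> 0" and "m0 \<ge> 0" and "n \<ge> 1" and "m \<ge> 1"
  shows "quasi_hom_minus_one_class d m0 n m \<longleftrightarrow>
    ((d, m0, n, m) = (2, 0, 5, 1) \<or> (d, m0, n, m) = (1, 1, 1, 1)
     \<or> (\<exists>e::int. e \<ge> 1 \<and> (d, m0, n, m) = (e, e - 1, 2 * e, 1))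
     \<or> (\<exists>x y :: int. m \<ge> 2 \<and> x \<ge> 1 \<and> y \<ge> 1 \<and>
          x * y = (m - 1) * (2 * m + 1) \<and> x + m \<ge> y \<and>
          [x - y = m] (mod 2) \<and> m dvd (x + 2 * y - 1) \<and>
          d = (x + y + 3 * m) div 2 \<and> m0 = (x - y + m) div 2 \<and>
          n = (x + 2 * y - 1) div m + 4))"
proof
  assume Q: "quasi_hom_minus_one_class d m0 n m"
  hence E1: "d^2 - m0^2 - n*m^2 = -1"
    and E2: "d * (d - 3) - m0 * (m0 - 1) - n * m * (m - 1) = -2"
    by (auto simp: quasi_hom_minus_one_class_def self_intersection_def two_genus_minus_two_def)
  have L: "n*m = 3*d - m0 - 1" using E1 E2 by (simp add: algebra_simps power2_eq_square)
  show "((d, m0, n, m) = (2, 0, 5, 1) \<or> (d, m0, n, m) = (1, 1, 1, 1)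
     \<or> (\<exists>e::int. e \<ge> 1 \<and> (d, m0, n, m) = (e, e - 1, 2 * e, 1))
     \<or> (\<exists>x y :: int. m \<ge> 2 \<and> x \<ge> 1 \<and> y \<ge> 1 \<and>
          x * y = (m - 1) * (2 * m + 1) \<and> x + m \<ge> y \<and>
          [x - y = m] (mod 2) \<and> m dvd (x + 2 * y - 1) \<and>
          d = (x + y + 3 * m) div 2 \<and> m0 = (x - y + m) div 2 \<and>
          n = (x + 2 * y - 1) div m + 4))"
  proof (cases "m = 1")
    case True
    have "d^2 - m0^2 - n = -1" using E1 True by simp
    moreover have "d^2 - 3*d - m0^2 + m0 = -2" using E2 True by (simp add: algebra_simps power2_eq_square)
    ultimately have "(d = 2 \<and> m0 = 0 \<and> n = 5) \<or> (d = 1 \<and> m0 = 1 \<and> n = 1) \<or> (d \<ge> 1 \<and> m0 = d - 1 \<and> n = 2*d)"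
      using fwd_m1 assms by blast
    thus ?thesis using True by auto
  next
    case False
    hence m2: "m \<ge> 2" using assms by simp
    define x where "x = d + m0 - 2*m"
    define y where "y = d - m0 - m"
    have "x*y - (m-1)*(2*m+1) = (d^2 - m0^2 - n*m^2 + 1) + m*(n*m - 3*d + m0 + 1)"
      by (simp add: x_def y_def algebra_simps power2_eq_square)
    hence xy: "x*y = (m-1)*(2*m+1)" using E1 L by simp
    have nm: "x + 2*y - 1 = (n-4)*m" using L by (simp add: x_def y_def algebra_simps)
    have pos: "x*y > 0" using xy m2 by simp
    have "x \<ge> 1 \<and> y \<ge> 1"
    proof (rule ccontr)
      assume "\<not> (x \<ge> 1 \<and> y \<ge> 1)"
      hence "x < 0 \<and> y < 0" using pos by (auto simp: zero_less_mult_iff)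
      moreover have "n*m \<ge> m" using assms by simp
      moreover have "(-x)*(-y) = (m-1)*(2*m+1)" using xy by simp
      moreover have "(-x) + 2*(-y) \<le> 3*m - 1" using L \<open>n*m \<ge> m\<close> by (simp add: x_def y_def)
      ultimately show False using neg_case[of m "-x" "-y"] m2 by linarith
    qed
    moreover have "[x - y = m] (mod 2)"
    proof -
      have "x - y - m = 2*(m0 - m)" by (simp add: x_def y_def)
      thus ?thesis by (metis cong_iff_dvd_diff dvd_triv_left)
    qed
    moreover have "m dvd (x + 2*y - 1)" using nm by simp
    moreover have "n = (x + 2 * y - 1) div m + 4"
    proof -
      have "(x + 2 * y - 1) div m = ((n - 4) * m) div m" using nm by (rule arg_cong)
      also have "\<dots> = n - 4" by (rule nonzero_mult_div_cancel_right) (use m2 in linarith)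
      finally have "(x + 2 * y - 1) div m = n - 4" .
      thus ?thesis by simp
    qed
    moreover have "d = (x + y + 3 * m) div 2" by (simp add: x_def y_def)
    moreover have "m0 = (x - y + m) div 2" by (simp add: x_def y_def)
    moreover have "x + m \<ge> y" using assms by (simp add: x_def y_def)
    ultimately show ?thesis using m2 xy by blast
  qed
next
  assume H: "((d, m0, n, m) = (2, 0, 5, 1) \<or> (d, m0, n, m) = (1, 1, 1, 1)
     \<or> (\<exists>e::int. e \<ge> 1 \<and> (d, m0, n, m) = (e, e - 1, 2 * e, 1))
     \<or> (\<exists>x y :: int. m \<ge> 2 \<and> x \<ge> 1 \<and> y \<ge> 1 \<and>
          x * y = (m - 1) * (2 * m + 1) \<and> x + m \<ge> y \<and>
          [x - y = m] (mod 2) \<and> m dvd (x + 2 * y - 1) \<and>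
          d = (x + y + 3 * m) div 2 \<and> m0 = (x - y + m) div 2 \<and>
          n = (x + 2 * y - 1) div m + 4))"
  show "quasi_hom_minus_one_class d m0 n m"
  proof -
    { assume "(d, m0, n, m) = (2, 0, 5, 1) \<or> (d, m0, n, m) = (1, 1, 1, 1)"
      hence ?thesis by (auto simp: quasi_hom_minus_one_class_def self_intersection_def two_genus_minus_two_def) }
    moreover
    { assume "\<exists>e::int. e \<ge> 1 \<and> (d, m0, n, m) = (e, e - 1, 2 * e, 1)"
      hence ?thesis by (auto simp: quasi_hom_minus_one_class_def self_intersection_def
          two_genus_minus_two_def algebra_simps power2_eq_square) }
    moreover
    { assume "\<exists>x y :: int. m \<ge> 2 \<and> x \<ge> 1 \<and> y \<ge> 1 \<and>
          x * y = (m - 1) * (2 * m + 1) \<and> x + m \<ge> y \<and>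
          [x - y = m] (mod 2) \<and> m dvd (x + 2 * y - 1) \<and>
          d = (x + y + 3 * m) div 2 \<and> m0 = (x - y + m) div 2 \<and>
          n = (x + 2 * y - 1) div m + 4"
      then obtain x y where m2: "m \<ge> 2" and xy: "x * y = (m - 1) * (2 * m + 1)"
        and c: "[x - y = m] (mod 2)" and dv: "m dvd (x + 2 * y - 1)"
        and dd: "d = (x + y + 3 * m) div 2" and md: "m0 = (x - y + m) div 2"
        and nd: "n = (x + 2 * y - 1) div m + 4" by blast
      have "2 dvd (x - y - m)" using c cong_iff_dvd_diff by blast
      then obtain t where t: "x - y - m = 2*t" by blast
      have e3: "x + y + 3*m = 2*(y + 2*m + t)" using t by simp
      have e4: "x - y + m = 2*(m + t)" using t by simp
      have d2: "2*d = x + y + 3*m" using dd unfolding e3 by simp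
      have m02: "2*m0 = x - y + m" using md unfolding e4 by simp
      obtain s where s: "x + 2*y - 1 = m*s" using dv by blast
      have "(x + 2 * y - 1) div m = (m * s) div m" using s by (rule arg_cong)
      also have "\<dots> = s" by (rule nonzero_mult_div_cancel_left) (use m2 in linarith)
      finally have "(x + 2 * y - 1) div m = s" .
      hence ns: "n = s + 4" using nd by simp
      have nm: "n*m = x + 2*y - 1 + 4*m" using ns s by (simp add: algebra_simps)
      have A: "4*(d^2 - m0^2 - n*m^2 + 1) = 4*(x*y - (m - 1) * (2 * m + 1))"
      proof -
        have "4*(d^2 - m0^2 - n*m^2 + 1) = (2*d)^2 - (2*m0)^2 - 4*m*(n*m) + 4"
          by (simp add: algebra_simps power2_eq_square)
        also have "\<dots> = 4*(x*y - (m - 1) * (2 * m + 1))"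
          unfolding d2 m02 nm by (simp add: algebra_simps power2_eq_square)
        finally show ?thesis .
      qed
      hence e1: "d^2 - m0^2 - n*m^2 = -1" using xy by simp
      have "d * (d - 3) - m0 * (m0 - 1) - n * m * (m - 1) = (d^2 - m0^2 - n*m^2) - 3*d + m0 + n*m"
        by (simp add: algebra_simps power2_eq_square)
      also have "\<dots> = -2" using e1 nm d2 m02 by simp
      finally have ?thesis using e1
        by (simp add: quasi_hom_minus_one_class_def self_intersection_def two_genus_minus_two_def) }
    ultimately show ?thesis using H by blast
  qed
qed

end
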